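(* Let $\gamma\in(1,3)$ and $\mu\in(0,1)$. At the point $C=(U_C,H_C)=\big(\frac{2\mu}{\gamma+1},(\frac{\gamma-1}{\gamma+1})^2\mu^2\big)$, where $F=G=0$, the quadratic equation for the slope $s=\frac{dH}{dU}$ of integral curves of $\frac{dH}{dU}=\frac{F(H,U)}{G(H,U)}$, \[ G_H\,s^2+(G_U-F_H)\,s-F_U=0\quad\text{(coefficients evaluated at }C), \] i.e. $s=\frac{F_H-G_U\pm\sqrt{(G_U-F_H)^2+4F_UG_H}}{2G_H}$, has two distinct real roots; that is, there are two distinct branches of integral curves at $C$.
   Context: Set $k_1=\frac{(\gamma+1)+\mu(3-\gamma)}{2}$, $k_2=\frac{2(1-\mu)}{\gamma-1}$, $F(H,U)=2H[H-(U^2-k_1U+\mu)]$, $G(H,U)=H(U+k_2)-U(U-1)(U-\mu)$. The partial derivatives are $F_H=4H-2(U^2-k_1U+\mu)$, $F_U=-2H(2U-k_1)$, $G_H=U+k_2$, $G_U=H-3U^2+2(1+\mu)U-\mu$. *)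

theory Defs
  imports Complex_Main
begin

definition k1 :: "real \<Rightarrow> real \<Rightarrow> real" where
  "k1 \<gamma> \<mu> = ((\<gamma> + 1) + \<mu> * (3 - \<gamma>)) / 2"

definition k2 :: "real \<Rightarrow> real \<Rightarrow> real" where
  "k2 \<gamma> \<mu> = 2 * (1 - \<mu>) / (\<gamma> - 1)"

definition FF :: "real \<Rightarrow> real \<Rightarrow> real \<Rightarrow> real \<Rightarrow> real" where
  "FF \<gamma> \<mu> H U = 2 * H * (H - (U^2 - k1 \<gamma> \<mu> * U + \<mu>))"

definition GG :: "real \<Rightarrow> real \<Rightarrow> real \<Rightarrow> real \<Rightarrow> real" where
  "GG \<gamma> \<mu> H U = H * (U + k2 \<gamma> \<mu>) - U * (U - 1) * (U - \<mu>)"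

definition F_H :: "real \<Rightarrow> real \<Rightarrow> real \<Rightarrow> real \<Rightarrow> real" where
  "F_H \<gamma> \<mu> H U = 4 * H - 2 * (U^2 - k1 \<gamma> \<mu> * U + \<mu>)"

definition F_U :: "real \<Rightarrow> real \<Rightarrow> real \<Rightarrow> real \<Rightarrow> real" where
  "F_U \<gamma> \<mu> H U = - 2 * H * (2 * U - k1 \<gamma> \<mu>)"

definition G_H :: "real \<Rightarrow> real \<Rightarrow> real \<Rightarrow> real \<Rightarrow> real" where
  "G_H \<gamma> \<mu> H U = U + k2 \<gamma> \<mu>"

definition G_U :: "real \<Rightarrow> real \<Rightarrow> real \<Rightarrow> real \<Rightarrow> real" where
  "G_U \<gamma> \<mu> H U = H - 3 * U^2 + 2 * (1 + \<mu>) * U - \<mu>"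

end

theory Submission
  imports Defs
begin

lemma two_roots:
  fixes A B C :: real
  assumes "A > 0" "C > 0"
  shows "\<exists>s1 s2. s1 \<noteq> s2 \<and> A * s1^2 + B * s1 - C = 0 \<and> A * s2^2 + B * s2 - C = 0"
proof -
  define D where "D = B^2 + 4*A*C"
  have D: "D > 0" using assms unfolding D_def by (simp add: add_nonneg_pos)
  define r where "r = sqrt D"
  have r: "r > 0" "r^2 = D" using D unfolding r_def by auto
  let ?s1 = "(-B + r)/(2*A)" and ?s2 = "(-B - r)/(2*A)"
  have ne: "?s1 \<noteq> ?s2" using r assms by (simp add: divide_simps)
  have e1: "A * ?s1^2 + B * ?s1 - C = 0"
    using assms r unfolding D_def by (simp add: field_simps power2_eq_square, (simp add: algebra_simps)?)
  have e2: "A * ?s2^2 + B * ?s2 - C = 0"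
    using assms r unfolding D_def by (simp add: field_simps power2_eq_square, (simp add: algebra_simps)?)
  show ?thesis using ne e1 e2 by blast
qed

lemma q_aux: fixes a m :: real assumes "a \<noteq> 0"
  shows "(2*m/a)^2 - ((a + m*(4-a))/2)*(2*m/a) + m = ((a-2)/a)^2 * m^2"
  using assms by (simp add: field_simps power2_eq_square, (simp add: algebra_simps)?)
lemma g_aux: fixes a m :: real assumes "a \<noteq> 0" "a - 2 \<noteq> 0"
  shows "((a-2)/a)^2 * m^2 * (2*m/a + 2*(1-m)/(a-2)) - (2*m/a)*(2*m/a - 1)*(2*m/a - m) = 0"
  using assms by (simp add: field_simps power2_eq_square, (simp add: algebra_simps)?)

theorem lemma3p3:
  fixes \<gamma> \<mu> :: real
  assumes "1 < \<gamma>" "\<gamma> < 3" "0 < \<mu>" "\<mu> < 1"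
  defines "UC \<equiv> 2 * \<mu> / (\<gamma> + 1)"
      and "HC \<equiv> ((\<gamma> - 1) / (\<gamma> + 1))^2 * \<mu>^2"
  shows "FF \<gamma> \<mu> HC UC = 0 \<and> GG \<gamma> \<mu> HC UC = 0 \<and> G_H \<gamma> \<mu> HC UC \<noteq> 0 \<and>
    (\<exists>s1 s2. s1 \<noteq> s2 \<and>
      G_H \<gamma> \<mu> HC UC * s1^2 + (G_U \<gamma> \<mu> HC UC - F_H \<gamma> \<mu> HC UC) * s1 - F_U \<gamma> \<mu> HC UC = 0 \<and>
      G_H \<gamma> \<mu> HC UC * s2^2 + (G_U \<gamma> \<mu> HC UC - F_H \<gamma> \<mu> HC UC) * s2 - F_U \<gamma> \<mu> HC UC = 0)"
proof -
  have a: "\<gamma> + 1 > 0" "\<gamma> - 1 > 0" using assms by auto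
  have q: "UC^2 - k1 \<gamma> \<mu> * UC + \<mu> = HC"
    using q_aux[of "\<gamma>+1" \<mu>] a unfolding UC_def HC_def k1_def
    by (simp add: algebra_simps)
  have F: "FF \<gamma> \<mu> HC UC = 0" unfolding FF_def q by simp
  have G: "GG \<gamma> \<mu> HC UC = 0"
    using g_aux[of "\<gamma>+1" \<mu>] a unfolding GG_def UC_def HC_def k2_def
    by (simp add: algebra_simps)
  have GH: "G_H \<gamma> \<mu> HC UC = 2 * (\<gamma> + 1 - 2*\<mu>) / ((\<gamma>+1)*(\<gamma>-1))"
    unfolding G_H_def UC_def k2_def using a
    by (simp add: field_simps, (simp add: algebra_simps)?)
  have GHp: "G_H \<gamma> \<mu> HC UC > 0" unfolding GH using a assms by simp
  have HCp: "HC > 0" unfolding HC_def using a assms by simp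
  have t: "2 * UC - k1 \<gamma> \<mu> = (\<mu> * (8 - 4*(\<gamma>+1) + (\<gamma>+1)^2) - (\<gamma>+1)^2) / (2*(\<gamma>+1))"
    unfolding UC_def k1_def using a
    by (simp add: field_simps power2_eq_square, (simp add: algebra_simps)?)
  have pos8: "8 - 4*(\<gamma>+1) + (\<gamma>+1)^2 > 0" proof -
    have "8 - 4*(\<gamma>+1) + (\<gamma>+1)^2 = (\<gamma>-1)^2 + 4" by (simp add: power2_eq_square algebra_simps)
    moreover have "(\<gamma>-1)^2 \<ge> 0" by simp
    ultimately show ?thesis by linarith
  qed
  have "\<mu> * (8 - 4*(\<gamma>+1) + (\<gamma>+1)^2) < 8 - 4*(\<gamma>+1) + (\<gamma>+1)^2"
    using pos8 assms(1-4) by simp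
  hence "\<mu> * (8 - 4*(\<gamma>+1) + (\<gamma>+1)^2) - (\<gamma>+1)^2 < 0" proof -
    have "(8 - 4*(\<gamma>+1) + (\<gamma>+1)^2) - (\<gamma>+1)^2 < 0" using assms(1) by (simp add: algebra_simps)
    thus ?thesis using \<open>\<mu> * (8 - 4*(\<gamma>+1) + (\<gamma>+1)^2) < 8 - 4*(\<gamma>+1) + (\<gamma>+1)^2\<close>
      by (smt (verit))
  qed
  hence neg: "2 * UC - k1 \<gamma> \<mu> < 0" unfolding t using a by (simp add: divide_neg_pos)
  have FUp: "F_U \<gamma> \<mu> HC UC > 0" unfolding F_U_def using HCp neg
    by (simp add: mult_pos_neg)
  show ?thesis using F G GHp two_roots[OF GHp FUp] by auto
qed

end
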